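(* Let $\mathcal G=(\mathcal V,\mathcal E)$ be a hypergraph with $\mathcal V=[n]$, all of whose edges are nonempty, with set of special vertices $\mathcal V^{\mathrm{sp}}\subseteq\mathcal V$. Then for every $q\in\mathbb Z$ we have, as formal power series in $\mathbb Q[[x_1,\dots,x_n]]$, \[ I^{\mathrm{mark}}(\mathcal G,x)^q=\sum_{\mathbf m\in\mathbb Z_{\ge0}^n}{}_{\mathbf m}\Pi^{\mathrm{mark}}_{\mathcal G}(q)\,x^{\mathbf m}, \] where ${}_{\mathbf m}\Pi^{\mathrm{mark}}_{\mathcal G}$ denotes the unique polynomial in $q$ whose value at each positive integer $q$ is the number of marked multi-colorings of $\mathcal G$ associated to $\mathbf m$ using at most $q$ colors (for $\mathbf m=\mathbf 0$ this polynomial is the constant $1$).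
   Context: A hypergraph $\mathcal G=(\mathcal V,\mathcal E)$ has vertex set $\mathcal V=[n]=\{1,\dots,n\}$ and edge set $\mathcal E$ a collection of subsets of $[n]$; $\mathcal V^{\mathrm{sp}}\subseteq\mathcal V$ is a fixed set of special vertices. A finite multiset $U$ with elements in $\mathcal V$ is marked-independent if its underlying set contains no edge $e\in\mathcal E$ and every vertex of $\mathcal V\setminus\mathcal V^{\mathrm{sp}}$ occurs at most once in $U$ (the empty multiset is marked-independent). For such $U$, $x(U)=\prod_v x_v^{r_v}$ where $v$ occurs $r_v$ times in $U$. The marked independence series is $I^{\mathrm{mark}}(\mathcal G,x)=\sum_U x(U)$, summed over all marked-independent multisets $U$; it has constant term $1$. For $\mathbf m=(m_v)\in\mathbb Z_{\ge0}^n$ and $q\in\mathbb N$, a marked multi-coloring of $\mathcal G$ associated to $\mathbf m$ using at most $q$ colors is a map $\Gamma$ assigning to each $v$ a finite multiset $\Gamma(v)$ with elements in $\{1,\dots,q\}$ such that $\Gamma(v)$ is a set for $v\notin\mathcal V^{\mathrm{sp}}$, $|\Gamma(v)|=m_v$ (with multiplicity), and for every $e\in\mathcal E$ the underlying sets of $\Gamma(v)$, $v\in e$, have empty common intersection; two colorings are distinct if they differ at some vertex. $x^{\mathbf m}=\prod_v x_v^{m_v}$. *)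

theory Defs
  imports Main "HOL-Library.Multiset" "HOL-Computational_Algebra.Polynomial"
begin

(* Multivariate formal power series over Q in the variables x_1..x_n are represented
   by their coefficient functions: a monomial x^m is an exponent vector m :: nat => nat
   (only monomials with support in {1..n} are relevant). *)

type_synonym mfps = "(nat \<Rightarrow> nat) \<Rightarrow> rat"

definition mon_supp :: "(nat \<Rightarrow> nat) \<Rightarrow> nat set" where
  "mon_supp m = {i. m i \<noteq> 0}"

definition mfps_mult :: "mfps \<Rightarrow> mfps \<Rightarrow> mfps" where
  "mfps_mult f g = (\<lambda>m. \<Sum>a\<in>{a. \<forall>i. a i \<le> m i}. f a * g (\<lambda>i. m i - a i))"

definition mfps_one :: mfps where
  "mfps_one = (\<lambda>m. if m = (\<lambda>_. 0) then 1 else 0)"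

primrec mfps_pow :: "mfps \<Rightarrow> nat \<Rightarrow> mfps" where
  "mfps_pow f 0 = mfps_one"
| "mfps_pow f (Suc k) = mfps_mult f (mfps_pow f k)"

definition mfps_inv :: "nat \<Rightarrow> mfps \<Rightarrow> mfps" where
  "mfps_inv n f = (THE g. (\<forall>m. \<not> mon_supp m \<subseteq> {1..n} \<longrightarrow> g m = 0) \<and>
      (\<forall>m. mon_supp m \<subseteq> {1..n} \<longrightarrow> mfps_mult g f m = mfps_one m))"

definition mfps_ipow :: "nat \<Rightarrow> mfps \<Rightarrow> int \<Rightarrow> mfps" where
  "mfps_ipow n f q = (if 0 \<le> q then mfps_pow f (nat q) else mfps_pow (mfps_inv n f) (nat (- q)))"

definition marked_indep :: "nat \<Rightarrow> nat set set \<Rightarrow> nat set \<Rightarrow> nat multiset \<Rightarrow> bool" where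
  "marked_indep n E Vsp U \<longleftrightarrow> set_mset U \<subseteq> {1..n} \<and> (\<forall>e\<in>E. \<not> e \<subseteq> set_mset U)
      \<and> (\<forall>v\<in>{1..n} - Vsp. count U v \<le> 1)"

definition I_mark :: "nat \<Rightarrow> nat set set \<Rightarrow> nat set \<Rightarrow> mfps" where
  "I_mark n E Vsp = (\<lambda>m. of_nat (card {U. marked_indep n E Vsp U \<and> (\<forall>v. count U v = m v)}))"

definition marked_colorings :: "nat \<Rightarrow> nat set set \<Rightarrow> nat set \<Rightarrow> (nat \<Rightarrow> nat) \<Rightarrow> nat \<Rightarrow> (nat \<Rightarrow> nat multiset) set" where
  "marked_colorings n E Vsp m q = {\<Gamma>.
      (\<forall>v. v \<notin> {1..n} \<longrightarrow> \<Gamma> v = {#}) \<and>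
      (\<forall>v\<in>{1..n}. set_mset (\<Gamma> v) \<subseteq> {1..q} \<and> size (\<Gamma> v) = m v \<and>
                    (v \<notin> Vsp \<longrightarrow> (\<forall>c. count (\<Gamma> v) c \<le> 1))) \<and>
      (\<forall>e\<in>E. (\<Inter>v\<in>e. set_mset (\<Gamma> v)) = {})}"

end

theory Submission
  imports Defs
begin

definition Dm :: "(nat \<Rightarrow> nat) \<Rightarrow> (nat \<Rightarrow> nat) set" where
  "Dm m = {a. \<forall>i. a i \<le> m i}"

definition sz :: "nat \<Rightarrow> (nat \<Rightarrow> nat) \<Rightarrow> nat" where
  "sz n m = (\<Sum>i\<in>{1..n}. m i)"

lemma mult_Dm: "mfps_mult f g m = (\<Sum>a\<in>Dm m. f a * g (\<lambda>i. m i - a i))"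
  by (simp add: mfps_mult_def Dm_def)

lemma supp_le: "mon_supp m \<subseteq> S \<Longrightarrow> a \<in> Dm m \<Longrightarrow> mon_supp a \<subseteq> S"
proof
  fix x assume "mon_supp m \<subseteq> S" "a \<in> Dm m" "x \<in> mon_supp a"
  then have "a x \<le> m x" "a x \<noteq> 0" unfolding mon_supp_def Dm_def by auto
  then have "m x \<noteq> 0" by linarith
  then show "x \<in> S" using \<open>mon_supp m \<subseteq> S\<close> unfolding mon_supp_def by auto
qed

lemma supp_diff: "mon_supp m \<subseteq> S \<Longrightarrow> mon_supp (\<lambda>i. m i - a i) \<subseteq> S"
  unfolding mon_supp_def by auto

lemma finite_Dm:
  assumes "mon_supp m \<subseteq> {1..n}"
  shows "finite (Dm m)"
proof -
  have "Dm m \<subseteq> {f. \<forall>x. (x \<in> {1..n} \<longrightarrow> f x \<in> {0..Max (m ` {1..n})}) \<and> (x \<notin> {1..n} \<longrightarrow> f x = 0)}"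
  proof safe
    fix f x assume f: "f \<in> Dm m"
    { assume "x \<in> {1..n}"
      then have "m x \<le> Max (m ` {1..n})" by (intro Max_ge) auto
      then show "f x \<in> {0..Max (m ` {1..n})}" using f by (auto simp: Dm_def intro: order_trans) }
    { assume "x \<notin> {1..n}"
      then have "m x = 0" using assms by (auto simp: mon_supp_def)
      then show "f x = 0" using f by (simp add: Dm_def) (metis le_zero_eq) }
  qed
  moreover have "finite {f. \<forall>x. (x \<in> {1..n} \<longrightarrow> f x \<in> {0..Max (m ` {1..n})}) \<and> (x \<notin> {1..n} \<longrightarrow> f x = (0::nat))}"
    by (rule finite_set_of_finite_funs) auto
  ultimately show ?thesis by (rule finite_subset)
qed

lemma mult_cong:
  assumes "\<And>a. a \<in> Dm m \<Longrightarrow> f a = f' a"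
    and "\<And>a. a \<in> Dm m \<Longrightarrow> g (\<lambda>i. m i - a i) = g' (\<lambda>i. m i - a i)"
  shows "mfps_mult f g m = mfps_mult f' g' m"
  unfolding mult_Dm using assms by (intro sum.cong) auto

lemma zero_in_Dm: "(\<lambda>_. 0) \<in> Dm m" by (simp add: Dm_def)
lemma self_in_Dm: "m \<in> Dm m" by (simp add: Dm_def)

lemma one_left:
  assumes "mon_supp m \<subseteq> {1..n}"
  shows "mfps_mult mfps_one g m = g m"
proof -
  have "mfps_mult mfps_one g m = (\<Sum>a\<in>Dm m. if a = (\<lambda>_. 0) then g (\<lambda>i. m i - a i) else 0)"
    unfolding mult_Dm mfps_one_def by (intro sum.cong) auto
  also have "\<dots> = g (\<lambda>i. m i - 0)"
    using finite_Dm[OF assms] zero_in_Dm by (simp add: sum.delta)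
  finally show ?thesis by simp
qed

lemma one_right:
  assumes "mon_supp m \<subseteq> {1..n}"
  shows "mfps_mult g mfps_one m = g m"
proof -
  have eq: "a \<in> Dm m \<Longrightarrow> ((\<lambda>i. m i - a i) = (\<lambda>_. 0)) = (a = m)" for a
    by (auto simp: Dm_def fun_eq_iff intro: le_antisym)
  have "mfps_mult g mfps_one m = (\<Sum>a\<in>Dm m. if a = m then g a else 0)"
    unfolding mult_Dm mfps_one_def by (intro sum.cong) (auto simp: eq)
  also have "\<dots> = g m"
    using finite_Dm[OF assms] self_in_Dm by (simp add: sum.delta)
  finally show ?thesis .
qed


lemma assoc:
  assumes "mon_supp m \<subseteq> {1..n}"
  shows "mfps_mult f (mfps_mult g h) m = mfps_mult (mfps_mult f g) h m"
proof -
  have fin: "finite (Dm m)" "\<And>a. finite (Dm (\<lambda>i. m i - a i))" "\<And>c. c \<in> Dm m \<Longrightarrow> finite (Dm c)"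
    using finite_Dm[OF assms] finite_Dm[OF supp_diff[OF assms]] finite_Dm[OF supp_le[OF assms]]
    by auto
  have "mfps_mult f (mfps_mult g h) m =
     (\<Sum>(a,b)\<in>Sigma (Dm m) (\<lambda>a. Dm (\<lambda>i. m i - a i)). f a * (g b * h (\<lambda>i. m i - a i - b i)))"
    unfolding mult_Dm by (subst sum.Sigma[symmetric]) (auto simp: fin sum_distrib_left)
  also have "\<dots> = (\<Sum>(c,a)\<in>Sigma (Dm m) Dm. f a * g (\<lambda>i. c i - a i) * h (\<lambda>i. m i - c i))"
  proof (rule sum.reindex_bij_witness[where i = "\<lambda>(c,a). (a, \<lambda>i. c i - a i)" and j = "\<lambda>(a,b). (\<lambda>i. a i + b i, a)"])
    fix ca assume "ca \<in> Sigma (Dm m) Dm"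
    then show "(case (case ca of (c, a) \<Rightarrow> (a, \<lambda>i. c i - a i)) of (a, b) \<Rightarrow> (\<lambda>i. a i + b i, a)) = ca"
      by (auto simp: Dm_def fun_eq_iff)
  next
    fix ca assume "ca \<in> Sigma (Dm m) Dm"
    then show "(case ca of (c, a) \<Rightarrow> (a, \<lambda>i. c i - a i)) \<in> Sigma (Dm m) (\<lambda>a. Dm (\<lambda>i. m i - a i))"
      by (auto simp: Dm_def) (meson diff_le_mono order_trans)+
  next
    fix ab assume "ab \<in> Sigma (Dm m) (\<lambda>a. Dm (\<lambda>i. m i - a i))"
    then show "(case (case ab of (a, b) \<Rightarrow> (\<lambda>i. a i + b i, a)) of (c, a) \<Rightarrow> (a, \<lambda>i. c i - a i)) = ab"
      by (auto simp: fun_eq_iff)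
  next
    fix ab assume "ab \<in> Sigma (Dm m) (\<lambda>a. Dm (\<lambda>i. m i - a i))"
    then show "(case ab of (a, b) \<Rightarrow> (\<lambda>i. a i + b i, a)) \<in> Sigma (Dm m) Dm"
      by (auto simp: Dm_def) (metis le_diff_conv2 add.commute)
  next
    fix ab assume "ab \<in> Sigma (Dm m) (\<lambda>a. Dm (\<lambda>i. m i - a i))"
    then show "(case (case ab of (a, b) \<Rightarrow> (\<lambda>i. a i + b i, a)) of (c, a) \<Rightarrow> f a * g (\<lambda>i. c i - a i) * h (\<lambda>i. m i - c i)) =
       (case ab of (a, b) \<Rightarrow> f a * (g b * h (\<lambda>i. m i - a i - b i)))"
      by (auto simp: Dm_def diff_diff_left)
  qed
  also have "\<dots> = mfps_mult (mfps_mult f g) h m"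
    unfolding mult_Dm by (subst sum.Sigma[symmetric]) (auto simp: fin sum_distrib_right)
  finally show ?thesis .
qed

lemma pow_add:
  assumes "mon_supp m \<subseteq> {1..n}"
  shows "mfps_pow f (q + r) m = mfps_mult (mfps_pow f q) (mfps_pow f r) m"
  using assms
proof (induction q arbitrary: m)
  case 0
  then show ?case by (simp add: one_left)
next
  case (Suc q)
  have "mfps_pow f (Suc q + r) m = mfps_mult f (mfps_pow f (q + r)) m" by simp
  also have "\<dots> = mfps_mult f (mfps_mult (mfps_pow f q) (mfps_pow f r)) m"
    by (rule mult_cong) (simp_all add: Suc.IH[OF supp_diff[OF Suc.prems]])
  also have "\<dots> = mfps_mult (mfps_pow f (Suc q)) (mfps_pow f r) m"
    using assoc[OF Suc.prems] by simp
  finally show ?case .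
qed

definition Jof :: "mfps \<Rightarrow> mfps" where
  "Jof f = (\<lambda>a. if a = (\<lambda>_. 0) then 0 else f a)"

lemma sz_diff:
  assumes "a \<in> Dm m"
  shows "sz n (\<lambda>i. m i - a i) + sz n a = sz n m"
  using assms unfolding sz_def Dm_def by (simp add: sum.distrib[symmetric])

lemma sz_pos:
  assumes "mon_supp a \<subseteq> {1..n}" "a \<noteq> (\<lambda>_. 0)"
  shows "sz n a > 0"
proof -
  obtain i where i: "a i \<noteq> 0" using assms(2) by auto
  then have "i \<in> {1..n}" using assms(1) by (auto simp: mon_supp_def)
  then have "a i \<le> sz n a" unfolding sz_def by (intro member_le_sum) auto
  then show ?thesis using i by simp
qed

lemma sz_less:
  assumes "mon_supp m \<subseteq> {1..n}" "a \<in> Dm m" "a \<noteq> m"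
  shows "sz n a < sz n m"
proof -
  obtain i where i: "a i \<noteq> m i" using assms(3) by auto
  then have "a i < m i" using assms(2) by (auto simp: Dm_def le_neq_implies_less)
  then have "i \<in> mon_supp m" by (simp add: mon_supp_def)
  then have "i \<in> {1..n}" using assms(1) by blast
  show ?thesis unfolding sz_def
    by (rule sum_strict_mono_ex1) (use assms(2) \<open>a i < m i\<close> \<open>i \<in> {1..n}\<close> in \<open>auto simp: Dm_def\<close>)
qed

lemma powJ_vanish:
  assumes "mon_supp m \<subseteq> {1..n}" "sz n m < k"
  shows "mfps_pow (Jof f) k m = 0"
  using assms
proof (induction k arbitrary: m)
  case 0
  then show ?case by simp
next
  case (Suc k)
  have "mfps_pow (Jof f) (Suc k) m = (\<Sum>a\<in>Dm m. Jof f a * mfps_pow (Jof f) k (\<lambda>i. m i - a i))"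
    by (simp add: mult_Dm)
  also have "\<dots> = 0"
  proof (rule sum.neutral, rule ballI)
    fix a assume a: "a \<in> Dm m"
    show "Jof f a * mfps_pow (Jof f) k (\<lambda>i. m i - a i) = 0"
    proof (cases "a = (\<lambda>_. 0)")
      case True
      then show ?thesis by (simp add: Jof_def)
    next
      case False
      have "sz n a > 0" using sz_pos[OF supp_le[OF Suc.prems(1) a] False] .
      then have "sz n (\<lambda>i. m i - a i) < k" using sz_diff[OF a, of n] Suc.prems(2) by linarith
      then show ?thesis using Suc.IH[OF supp_diff[OF Suc.prems(1)]] by simp
    qed
  qed
  finally show ?case .
qed

lemma pascal_sum:
  fixes F :: "nat \<Rightarrow> rat"
  shows "(\<Sum>k\<le>Suc q. of_nat (Suc q choose k) * F k) =
     (\<Sum>k\<le>q. of_nat (q choose k) * F k) + (\<Sum>k\<le>q. of_nat (q choose k) * F (Suc k))"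
proof -
  have A: "(\<Sum>k\<le>Suc q. of_nat (Suc q choose k) * F k) =
      F 0 + (\<Sum>k\<le>q. of_nat (q choose k) * F (Suc k)) + (\<Sum>k\<le>q. of_nat (q choose Suc k) * F (Suc k))"
    by (subst sum.atMost_Suc_shift) (simp add: sum.distrib algebra_simps)
  have "(\<Sum>k\<le>Suc q. of_nat (q choose k) * F k) = F 0 + (\<Sum>k\<le>q. of_nat (q choose Suc k) * F (Suc k))"
    by (subst sum.atMost_Suc_shift) simp
  moreover have "(\<Sum>k\<le>Suc q. of_nat (q choose k) * F k) = (\<Sum>k\<le>q. of_nat (q choose k) * F k)"
    by simp
  ultimately show ?thesis using A by simp
qed

lemma binom:
  assumes f0: "f (\<lambda>_. 0) = 1" and "mon_supp m \<subseteq> {1..n}"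
  shows "mfps_pow f q m = (\<Sum>k\<le>q. of_nat (q choose k) * mfps_pow (Jof f) k m)"
  using assms(2)
proof (induction q arbitrary: m)
  case 0
  then show ?case by simp
next
  case (Suc q)
  have fs: "f a = mfps_one a + Jof f a" for a
    by (simp add: mfps_one_def Jof_def f0)
  have "mfps_pow f (Suc q) m = (\<Sum>a\<in>Dm m. (mfps_one a + Jof f a) *
          (\<Sum>k\<le>q. of_nat (q choose k) * mfps_pow (Jof f) k (\<lambda>i. m i - a i)))"
    unfolding mfps_pow.simps mult_Dm
  proof (rule sum.cong[OF refl])
    fix a assume "a \<in> Dm m"
    show "f a * mfps_pow f q (\<lambda>i. m i - a i) = (mfps_one a + Jof f a) *
          (\<Sum>k\<le>q. of_nat (q choose k) * mfps_pow (Jof f) k (\<lambda>i. m i - a i))"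
      using Suc.IH[OF supp_diff[OF Suc.prems]] fs[of a] by simp
  qed
  also have "\<dots> = (\<Sum>k\<le>q. of_nat (q choose k) * (\<Sum>a\<in>Dm m. mfps_one a * mfps_pow (Jof f) k (\<lambda>i. m i - a i)))
     + (\<Sum>k\<le>q. of_nat (q choose k) * (\<Sum>a\<in>Dm m. Jof f a * mfps_pow (Jof f) k (\<lambda>i. m i - a i)))"
    by (simp add: distrib_right distrib_left sum.distrib sum_distrib_left mult_ac sum.swap[of _ "Dm m"])
  also have "\<dots> = (\<Sum>k\<le>q. of_nat (q choose k) * mfps_pow (Jof f) k m)
     + (\<Sum>k\<le>q. of_nat (q choose k) * mfps_pow (Jof f) (Suc k) m)"
    using one_left[OF Suc.prems, of "mfps_pow (Jof f) _"] by (simp add: mult_Dm)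
  also have "\<dots> = (\<Sum>k\<le>Suc q. of_nat (Suc q choose k) * mfps_pow (Jof f) k m)"
    by (rule pascal_sum[symmetric])
  finally show ?case .
qed

definition gbp :: "nat \<Rightarrow> rat poly" where
  "gbp k = smult (1 / fact k) (\<Prod>i<k. [:- of_nat i, 1:])"

lemma poly_gbp: "poly (gbp k) x = x gchoose k"
proof -
  have "poly (gbp k) x = (\<Prod>i<k. x - of_nat i) / fact k"
    by (simp add: gbp_def poly_prod)
  also have "\<dots> = x gchoose k"
    using gbinomial_mult_fact'[of x k] by (simp add: atLeast0LessThan field_simps)
  finally show ?thesis .
qed

definition Pm :: "mfps \<Rightarrow> nat \<Rightarrow> (nat \<Rightarrow> nat) \<Rightarrow> rat poly" where
  "Pm f n m = (\<Sum>k\<le>sz n m. smult (mfps_pow (Jof f) k m) (gbp k))"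

lemma Pm_nat:
  assumes f0: "f (\<lambda>_. 0) = 1" and supp: "mon_supp m \<subseteq> {1..n}"
  shows "poly (Pm f n m) (of_nat q) = mfps_pow f q m"
proof -
  let ?N = "max q (sz n m)"
  have "poly (Pm f n m) (of_nat q) = (\<Sum>k\<le>sz n m. of_nat (q choose k) * mfps_pow (Jof f) k m)"
    by (simp add: Pm_def poly_sum poly_gbp binomial_gbinomial mult.commute)
  also have "\<dots> = (\<Sum>k\<le>?N. of_nat (q choose k) * mfps_pow (Jof f) k m)"
    by (rule sum.mono_neutral_left) (auto simp: powJ_vanish[OF supp])
  also have "\<dots> = (\<Sum>k\<le>q. of_nat (q choose k) * mfps_pow (Jof f) k m)"
    by (rule sum.mono_neutral_right) auto
  also have "\<dots> = mfps_pow f q m" by (rule binom[of f, OF f0 supp, symmetric])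
  finally show ?thesis .
qed

lemma poly_ext_nat:
  fixes p p' :: "rat poly"
  assumes "\<And>q::nat. poly p (of_nat q) = poly p' (of_nat q)"
  shows "p = p'"
proof (rule ccontr)
  assume "p \<noteq> p'"
  then have "p - p' \<noteq> 0" by simp
  then have fin: "finite {x. poly (p - p') x = 0}" by (rule poly_roots_finite)
  have "range (of_nat :: nat \<Rightarrow> rat) \<subseteq> {x. poly (p - p') x = 0}"
    using assms by auto
  moreover have "infinite (range (of_nat :: nat \<Rightarrow> rat))"
    by (rule range_inj_infinite) (simp add: inj_on_def)
  ultimately show False using fin finite_subset by blast
qed

lemma Pm_conv:
  assumes f0: "f (\<lambda>_. 0) = 1" and supp: "mon_supp m \<subseteq> {1..n}"
  shows "poly (Pm f n m) (x + y) =
    (\<Sum>a\<in>Dm m. poly (Pm f n a) x * poly (Pm f n (\<lambda>i. m i - a i)) y)"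
proof -
  have supa: "a \<in> Dm m \<Longrightarrow> mon_supp a \<subseteq> {1..n}" for a using supp_le[OF supp] .
  have supd: "mon_supp (\<lambda>i. m i - a i) \<subseteq> {1..n}" for a using supp_diff[OF supp] .
  have nat: "poly (Pm f n m) (of_nat q + of_nat r) =
    (\<Sum>a\<in>Dm m. poly (Pm f n a) (of_nat q) * poly (Pm f n (\<lambda>i. m i - a i)) (of_nat r))" for q r
  proof -
    have "poly (Pm f n m) (of_nat q + of_nat r) = mfps_pow f (q + r) m"
      using Pm_nat[of f, OF f0 supp, of "q + r"] by simp
    also have "\<dots> = mfps_mult (mfps_pow f q) (mfps_pow f r) m" by (rule pow_add[OF supp])
    also have "\<dots> = (\<Sum>a\<in>Dm m. poly (Pm f n a) (of_nat q) * poly (Pm f n (\<lambda>i. m i - a i)) (of_nat r))"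
      unfolding mult_Dm by (intro sum.cong refl) (simp add: Pm_nat[of f, OF f0 supa] Pm_nat[of f, OF f0 supd])
    finally show ?thesis .
  qed
  have step1: "poly (Pm f n m) (x + of_nat r) =
    (\<Sum>a\<in>Dm m. poly (Pm f n a) x * poly (Pm f n (\<lambda>i. m i - a i)) (of_nat r))" for x r
  proof -
    have "pcompose (Pm f n m) [:of_nat r, 1:] =
       (\<Sum>a\<in>Dm m. smult (poly (Pm f n (\<lambda>i. m i - a i)) (of_nat r)) (Pm f n a))"
      by (rule poly_ext_nat) (simp add: poly_pcompose poly_sum nat add.commute mult.commute)
    then have "poly (pcompose (Pm f n m) [:of_nat r, 1:]) x =
       poly (\<Sum>a\<in>Dm m. smult (poly (Pm f n (\<lambda>i. m i - a i)) (of_nat r)) (Pm f n a)) x"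
      by simp
    then show ?thesis by (simp add: poly_pcompose poly_sum add.commute mult.commute)
  qed
  have "pcompose (Pm f n m) [:x, 1:] =
       (\<Sum>a\<in>Dm m. smult (poly (Pm f n a) x) (Pm f n (\<lambda>i. m i - a i)))"
    by (rule poly_ext_nat) (simp add: poly_pcompose poly_sum step1)
  then have "poly (pcompose (Pm f n m) [:x, 1:]) y =
       poly (\<Sum>a\<in>Dm m. smult (poly (Pm f n a) x) (Pm f n (\<lambda>i. m i - a i))) y"
    by simp
  then show ?thesis by (simp add: poly_pcompose poly_sum add.commute)
qed

definition gfun :: "mfps \<Rightarrow> nat \<Rightarrow> nat \<Rightarrow> mfps" where
  "gfun f n p = (\<lambda>a. if mon_supp a \<subseteq> {1..n} then poly (Pm f n a) (- of_nat p) else 0)"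

lemma gfun_supp: "mon_supp a \<subseteq> {1..n} \<Longrightarrow> gfun f n p a = poly (Pm f n a) (- of_nat p)"
  by (simp add: gfun_def)

lemma pow_one: "mon_supp m \<subseteq> {1..n} \<Longrightarrow> mfps_pow f 1 m = f m"
  by (simp add: one_right)

lemma inv_unique:
  assumes f0: "f (\<lambda>_. 0) = 1"
    and eq: "\<And>m. mon_supp m \<subseteq> {1..n} \<Longrightarrow> mfps_mult g f m = mfps_mult h f m"
    and supp: "mon_supp m \<subseteq> {1..n}"
  shows "g m = h m"
  using supp
proof (induction "sz n m" arbitrary: m rule: less_induct)
  case less
  have fin: "finite (Dm m)" using finite_Dm[OF less.prems] .
  have z: "(\<lambda>i. m i - m i) = (\<lambda>_. 0)" by simp
  have split: "mfps_mult k f m = k m + (\<Sum>a\<in>Dm m - {m}. k a * f (\<lambda>i. m i - a i))" for k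
    unfolding mult_Dm using sum.remove[OF fin self_in_Dm, of "\<lambda>a. k a * f (\<lambda>i. m i - a i)"]
    by (simp add: z f0)
  have "(\<Sum>a\<in>Dm m - {m}. g a * f (\<lambda>i. m i - a i)) = (\<Sum>a\<in>Dm m - {m}. h a * f (\<lambda>i. m i - a i))"
  proof (rule sum.cong[OF refl])
    fix a assume a: "a \<in> Dm m - {m}"
    then have "sz n a < sz n m" using sz_less[OF less.prems] by auto
    moreover have "mon_supp a \<subseteq> {1..n}" using supp_le[OF less.prems] a by auto
    ultimately show "g a * f (\<lambda>i. m i - a i) = h a * f (\<lambda>i. m i - a i)" using less.hyps by simp
  qed
  then show ?case using eq[OF less.prems] split[of g] split[of h] by simp
qed

lemma inv_eq:
  assumes f0: "f (\<lambda>_. 0) = 1"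
  shows "mfps_inv n f = gfun f n 1"
  unfolding mfps_inv_def
proof (rule the_equality)
  have "mfps_mult (gfun f n 1) f m = mfps_one m" if supp: "mon_supp m \<subseteq> {1..n}" for m
  proof -
    have "mfps_mult (gfun f n 1) f m =
       (\<Sum>a\<in>Dm m. poly (Pm f n a) (- 1) * poly (Pm f n (\<lambda>i. m i - a i)) (of_nat 1))"
      unfolding mult_Dm
    proof (rule sum.cong[OF refl])
      fix a assume a: "a \<in> Dm m"
      show "gfun f n 1 a * f (\<lambda>i. m i - a i) = poly (Pm f n a) (- 1) * poly (Pm f n (\<lambda>i. m i - a i)) (of_nat 1)"
        using gfun_supp[OF supp_le[OF supp a], of f 1] Pm_nat[of f "(\<lambda>i. m i - a i)" n 1, OF f0 supp_diff[OF supp]]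
          pow_one[OF supp_diff[OF supp], of f a] by simp
    qed
    also have "\<dots> = poly (Pm f n m) (- 1 + of_nat 1)"
      by (rule Pm_conv[of f, OF f0 supp, symmetric])
    also have "\<dots> = mfps_one m"
      using Pm_nat[of f, OF f0 supp, of 0] by simp
    finally show ?thesis .
  qed
  then show "(\<forall>m. \<not> mon_supp m \<subseteq> {1..n} \<longrightarrow> gfun f n 1 m = 0) \<and>
    (\<forall>m. mon_supp m \<subseteq> {1..n} \<longrightarrow> mfps_mult (gfun f n 1) f m = mfps_one m)"
    by (simp add: gfun_def)
next
  fix g assume g: "(\<forall>m. \<not> mon_supp m \<subseteq> {1..n} \<longrightarrow> g m = 0) \<and>
    (\<forall>m. mon_supp m \<subseteq> {1..n} \<longrightarrow> mfps_mult g f m = mfps_one m)"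
  have g1: "mfps_mult (gfun f n 1) f m = mfps_one m" if supp: "mon_supp m \<subseteq> {1..n}" for m
  proof -
    have "mfps_mult (gfun f n 1) f m =
       (\<Sum>a\<in>Dm m. poly (Pm f n a) (- 1) * poly (Pm f n (\<lambda>i. m i - a i)) (of_nat 1))"
      unfolding mult_Dm
    proof (rule sum.cong[OF refl])
      fix a assume a: "a \<in> Dm m"
      show "gfun f n 1 a * f (\<lambda>i. m i - a i) = poly (Pm f n a) (- 1) * poly (Pm f n (\<lambda>i. m i - a i)) (of_nat 1)"
        using gfun_supp[OF supp_le[OF supp a], of f 1] Pm_nat[of f "(\<lambda>i. m i - a i)" n 1, OF f0 supp_diff[OF supp]]
          pow_one[OF supp_diff[OF supp], of f a] by simp
    qed
    also have "\<dots> = poly (Pm f n m) (- 1 + of_nat 1)"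
      by (rule Pm_conv[of f, OF f0 supp, symmetric])
    also have "\<dots> = mfps_one m"
      using Pm_nat[of f, OF f0 supp, of 0] by simp
    finally show ?thesis .
  qed
  show "g = gfun f n 1"
  proof
    fix m show "g m = gfun f n 1 m"
    proof (cases "mon_supp m \<subseteq> {1..n}")
      case True
      show ?thesis by (rule inv_unique[of f, OF f0 _ True]) (use g g1 in simp)
    next
      case False
      then show ?thesis using g by (simp add: gfun_def)
    qed
  qed
qed

lemma pow_gfun:
  assumes f0: "f (\<lambda>_. 0) = 1" and supp: "mon_supp m \<subseteq> {1..n}"
  shows "mfps_pow (gfun f n 1) p m = poly (Pm f n m) (- of_nat p)"
  using supp
proof (induction p arbitrary: m)
  case 0
  then show ?case using Pm_nat[of f, OF f0 0, of 0] by simp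
next
  case (Suc p)
  have "mfps_pow (gfun f n 1) (Suc p) m =
     (\<Sum>a\<in>Dm m. poly (Pm f n a) (- 1) * poly (Pm f n (\<lambda>i. m i - a i)) (- of_nat p))"
    unfolding mfps_pow.simps mult_Dm
  proof (rule sum.cong[OF refl])
    fix a assume a: "a \<in> Dm m"
    show "gfun f n 1 a * mfps_pow (gfun f n 1) p (\<lambda>i. m i - a i) =
      poly (Pm f n a) (- 1) * poly (Pm f n (\<lambda>i. m i - a i)) (- of_nat p)"
      using gfun_supp[OF supp_le[OF Suc.prems a], of f 1] Suc.IH[OF supp_diff[OF Suc.prems], of a] by simp
  qed
  also have "\<dots> = poly (Pm f n m) (- 1 + - of_nat p)"
    by (rule Pm_conv[of f, OF f0 Suc.prems, symmetric])
  finally show ?case by (simp add: algebra_simps)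
qed

lemma ipow_poly:
  assumes f0: "f (\<lambda>_. 0) = 1" and supp: "mon_supp m \<subseteq> {1..n}"
  shows "mfps_ipow n f q m = poly (Pm f n m) (of_int q)"
proof (cases "0 \<le> q")
  case True
  then show ?thesis using Pm_nat[of f, OF f0 supp, of "nat q"] by (simp add: mfps_ipow_def)
next
  case False
  then have "of_int q = - (of_nat (nat (- q)) :: rat)" by simp
  then show ?thesis using False pow_gfun[of f, OF f0 supp, of "nat (- q)"]
    by (simp add: mfps_ipow_def inv_eq[of f, OF f0])
qed

definition mset_of :: "nat \<Rightarrow> (nat \<Rightarrow> nat) \<Rightarrow> nat multiset" where
  "mset_of n a = (\<Sum>v\<in>{1..n}. replicate_mset (a v) v)"

lemma count_mset_of: "count (mset_of n a) v = (if v \<in> {1..n} then a v else 0)"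
  unfolding mset_of_def count_sum by (simp add: count_replicate_mset)

lemma count_mset_of_supp: "mon_supp a \<subseteq> {1..n} \<Longrightarrow> count (mset_of n a) v = a v"
  unfolding count_mset_of mon_supp_def by auto

lemma I_val:
  assumes "mon_supp a \<subseteq> {1..n}"
  shows "I_mark n E Vsp a = (if marked_indep n E Vsp (mset_of n a) then 1 else 0)"
proof -
  have "{U. marked_indep n E Vsp U \<and> (\<forall>v. count U v = a v)} =
      (if marked_indep n E Vsp (mset_of n a) then {mset_of n a} else {})"
  proof -
    have "(\<forall>v. count U v = a v) \<longleftrightarrow> U = mset_of n a" for U
      using count_mset_of_supp[OF assms] by (auto simp: multiset_eq_iff)
    then show ?thesis by auto
  qed
  then show ?thesis by (simp add: I_mark_def)
qed

lemma I0:
  assumes hE: "\<forall>e\<in>E. e \<subseteq> {1..n} \<and> e \<noteq> {}"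
  shows "I_mark n E Vsp (\<lambda>_. 0) = 1"
proof -
  have "mset_of n (\<lambda>_. 0) = {#}" by (simp add: mset_of_def)
  moreover have "marked_indep n E Vsp {#}" using hE by (auto simp: marked_indep_def)
  ultimately show ?thesis by (subst I_val) (auto simp: mon_supp_def)
qed

lemma col_finite:
  assumes supp: "mon_supp m \<subseteq> {1..n}"
  shows "finite (marked_colorings n E Vsp m q)"
proof -
  define K where "K = Max (m ` {1..n})"
  define B where "B = (\<Union>k\<in>{..K}. multisets_of_size {1..q} k)"
  have "finite B" unfolding B_def by auto
  have "marked_colorings n E Vsp m q \<subseteq> {\<Gamma>. \<forall>x. (x \<in> {1..n} \<longrightarrow> \<Gamma> x \<in> B) \<and> (x \<notin> {1..n} \<longrightarrow> \<Gamma> x = {#})}"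
  proof safe
    fix \<Gamma> x assume G: "\<Gamma> \<in> marked_colorings n E Vsp m q" and x: "x \<in> {1..n}"
    then have "m x \<le> K" unfolding K_def by (intro Max_ge) auto
    then show "\<Gamma> x \<in> B" using G x unfolding B_def marked_colorings_def multisets_of_size_def by auto
  next
    fix \<Gamma> x assume G: "\<Gamma> \<in> marked_colorings n E Vsp m q" and x: "x \<notin> {1..n}"
    then show "\<Gamma> x = {#}" unfolding marked_colorings_def by auto
  qed
  moreover have "finite {\<Gamma>. \<forall>x. (x \<in> {1..n} \<longrightarrow> \<Gamma> x \<in> B) \<and> (x \<notin> {1..n} \<longrightarrow> \<Gamma> x = {#})}"
    by (rule finite_set_of_finite_funs) (auto simp: \<open>finite B\<close>)
  ultimately show ?thesis by (rule finite_subset)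
qed

lemma col0:
  assumes hE: "\<forall>e\<in>E. e \<subseteq> {1..n} \<and> e \<noteq> {}" and supp: "mon_supp m \<subseteq> {1..n}"
  shows "of_nat (card (marked_colorings n E Vsp m 0)) = mfps_one m"
proof (cases "m = (\<lambda>_. 0)")
  case True
  have "marked_colorings n E Vsp m 0 = {\<lambda>_. {#}}"
  proof safe
    fix \<Gamma> assume G: "\<Gamma> \<in> marked_colorings n E Vsp m 0"
    show "\<Gamma> = (\<lambda>_. {#})"
    proof
      fix v show "\<Gamma> v = {#}"
        using G by (cases "v \<in> {1..n}") (auto simp: marked_colorings_def True)
    qed
  next
    show "(\<lambda>_. {#}) \<in> marked_colorings n E Vsp m 0"
      using hE by (auto simp: marked_colorings_def True)
  qed
  then show ?thesis using True by (simp add: mfps_one_def)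
next
  case False
  then obtain v where v: "m v \<noteq> 0" by auto
  then have vn: "v \<in> {1..n}" using supp by (auto simp: mon_supp_def)
  have "marked_colorings n E Vsp m 0 = {}"
  proof safe
    fix \<Gamma> assume G: "\<Gamma> \<in> marked_colorings n E Vsp m 0"
    then have "set_mset (\<Gamma> v) \<subseteq> {1..0}" "size (\<Gamma> v) = m v" using vn unfolding marked_colorings_def by blast+
    then have "\<Gamma> v = {#}" "size (\<Gamma> v) = m v" by auto
    then show "\<Gamma> \<in> {}" using v by simp
  qed
  then show ?thesis using False by (simp add: mfps_one_def)
qed

definition piece :: "nat \<Rightarrow> nat set set \<Rightarrow> nat set \<Rightarrow> (nat \<Rightarrow> nat) \<Rightarrow> nat \<Rightarrow> (nat \<Rightarrow> nat) \<Rightarrow> (nat \<Rightarrow> nat multiset) set" where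
  "piece n E Vsp m q a = {\<Gamma> \<in> marked_colorings n E Vsp m (Suc q). \<forall>v. count (\<Gamma> v) (Suc q) = a v}"

lemma in_mset_of: "x \<in># mset_of n a \<longleftrightarrow> x \<in> {1..n} \<and> a x > 0"
  by (simp only: count_greater_zero_iff[symmetric] count_mset_of) auto

lemma piece_empty:
  assumes "\<not> marked_indep n E Vsp (mset_of n a)"
  shows "piece n E Vsp m q a = {}"
proof (rule ccontr)
  assume "piece n E Vsp m q a \<noteq> {}"
  then obtain \<Gamma> where G: "\<Gamma> \<in> marked_colorings n E Vsp m (Suc q)" and cnt: "\<And>v. count (\<Gamma> v) (Suc q) = a v"
    unfolding piece_def by auto
  have "marked_indep n E Vsp (mset_of n a)"
    unfolding marked_indep_def
  proof (intro conjI ballI)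
    show "set_mset (mset_of n a) \<subseteq> {1..n}" by (auto simp: in_mset_of)
  next
    fix e assume e: "e \<in> E"
    show "\<not> e \<subseteq> set_mset (mset_of n a)"
    proof
      assume sub: "e \<subseteq> set_mset (mset_of n a)"
      have "Suc q \<in> (\<Inter>v\<in>e. set_mset (\<Gamma> v))"
      proof
        fix v assume "v \<in> e"
        then have "a v > 0" using sub by (auto simp: in_mset_of)
        then show "Suc q \<in># \<Gamma> v" using cnt[of v] by (simp flip: count_greater_zero_iff)
      qed
      moreover have "(\<Inter>v\<in>e. set_mset (\<Gamma> v)) = {}" using G e unfolding marked_colorings_def by blast
      ultimately show False by blast
    qed
  next
    fix v assume v: "v \<in> {1..n} - Vsp"
    then have "\<forall>c. count (\<Gamma> v) c \<le> 1" using G unfolding marked_colorings_def by auto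
    then have "count (\<Gamma> v) (Suc q) \<le> 1" by blast
    then show "count (mset_of n a) v \<le> 1" using v cnt[of v] by (simp add: count_mset_of)
  qed
  then show False using assms by simp
qed

lemma piece_bij:
  assumes supp: "mon_supp m \<subseteq> {1..n}" and a: "a \<in> Dm m"
    and ind: "marked_indep n E Vsp (mset_of n a)"
  shows "bij_betw (\<lambda>\<Gamma>'. \<lambda>v. \<Gamma>' v + replicate_mset (a v) (Suc q))
           (marked_colorings n E Vsp (\<lambda>i. m i - a i) q) (piece n E Vsp m q a)"
proof (rule bij_betw_byWitness[where f' = "\<lambda>\<Gamma>. \<lambda>v. \<Gamma> v - replicate_mset (a v) (Suc q)"])
  have aout: "v \<notin> {1..n} \<Longrightarrow> a v = 0" for v
    using supp_le[OF supp a] by (auto simp: mon_supp_def)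
  have ale: "a v \<le> m v" for v using a by (auto simp: Dm_def)
  have a1: "a v \<le> 1" if v: "v \<in> {1..n} - Vsp" for v
  proof -
    have "count (mset_of n a) v \<le> 1" using ind v unfolding marked_indep_def by blast
    then show ?thesis using v by (simp add: count_mset_of)
  qed
  show "\<forall>\<Gamma>'\<in>marked_colorings n E Vsp (\<lambda>i. m i - a i) q.
     (\<lambda>v. (\<Gamma>' v + replicate_mset (a v) (Suc q)) - replicate_mset (a v) (Suc q)) = \<Gamma>'"
    by simp
  show "\<forall>\<Gamma>\<in>piece n E Vsp m q a. (\<lambda>v. (\<Gamma> v - replicate_mset (a v) (Suc q)) + replicate_mset (a v) (Suc q)) = \<Gamma>"
  proof (intro ballI ext)
    fix \<Gamma> v assume "\<Gamma> \<in> piece n E Vsp m q a"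
    then have "count (\<Gamma> v) (Suc q) = a v" by (simp add: piece_def)
    then have "replicate_mset (a v) (Suc q) \<subseteq># \<Gamma> v"
      by (simp flip: count_le_replicate_mset_subset_eq)
    then show "\<Gamma> v - replicate_mset (a v) (Suc q) + replicate_mset (a v) (Suc q) = \<Gamma> v"
      by (rule subset_mset.diff_add)
  qed
  show "(\<lambda>\<Gamma>'. \<lambda>v. \<Gamma>' v + replicate_mset (a v) (Suc q)) ` marked_colorings n E Vsp (\<lambda>i. m i - a i) q
        \<subseteq> piece n E Vsp m q a"
  proof safe
    fix \<Gamma>' assume G: "\<Gamma>' \<in> marked_colorings n E Vsp (\<lambda>i. m i - a i) q"
    define \<Gamma> where "\<Gamma> = (\<lambda>v. \<Gamma>' v + replicate_mset (a v) (Suc q))"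
    have out: "v \<notin> {1..n} \<Longrightarrow> \<Gamma>' v = {#}" for v using G unfolding marked_colorings_def by auto
    have inn: "v \<in> {1..n} \<Longrightarrow> set_mset (\<Gamma>' v) \<subseteq> {1..q} \<and> size (\<Gamma>' v) = m v - a v \<and>
                    (v \<notin> Vsp \<longrightarrow> (\<forall>c. count (\<Gamma>' v) c \<le> 1))" for v
      using G unfolding marked_colorings_def by auto
    have edge: "e \<in> E \<Longrightarrow> (\<Inter>v\<in>e. set_mset (\<Gamma>' v)) = {}" for e
      using G unfolding marked_colorings_def by auto
    have c0: "count (\<Gamma>' v) (Suc q) = 0" for v
    proof (cases "v \<in> {1..n}")
      case True
      then have "Suc q \<notin># \<Gamma>' v" using inn[of v] by auto
      then show ?thesis by (simp add: not_in_iff)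
    next
      case False
      then show ?thesis using out by simp
    qed
    have cnt: "count (\<Gamma> v) (Suc q) = a v" for v using c0[of v] by (simp add: \<Gamma>_def)
    have "\<Gamma> \<in> marked_colorings n E Vsp m (Suc q)"
      unfolding marked_colorings_def
    proof (intro CollectI conjI allI ballI impI)
      fix v assume "v \<notin> {1..n}"
      then show "\<Gamma> v = {#}" using out aout by (simp add: \<Gamma>_def)
    next
      fix v assume v: "v \<in> {1..n}"
      show "set_mset (\<Gamma> v) \<subseteq> {1..Suc q}" using inn[OF v] by (auto simp: \<Gamma>_def)
      show "size (\<Gamma> v) = m v" using inn[OF v] ale[of v] by (simp add: \<Gamma>_def)
      fix c assume "v \<notin> Vsp"
      then have "\<forall>c. count (\<Gamma>' v) c \<le> 1" "a v \<le> 1" using inn[OF v] a1 v by auto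
      then show "count (\<Gamma> v) c \<le> 1" using c0[of v] by (cases "c = Suc q") (auto simp: \<Gamma>_def)
    next
      fix e assume e: "e \<in> E"
      show "(\<Inter>v\<in>e. set_mset (\<Gamma> v)) = {}"
      proof (rule ccontr)
        assume "(\<Inter>v\<in>e. set_mset (\<Gamma> v)) \<noteq> {}"
        then obtain c where c: "\<And>v. v \<in> e \<Longrightarrow> c \<in># \<Gamma> v" by auto
        show False
        proof (cases "c = Suc q")
          case True
          have "e \<subseteq> set_mset (mset_of n a)"
          proof
            fix v assume v: "v \<in> e"
            then have "count (\<Gamma> v) (Suc q) > 0" using c True by simp
            then have "a v > 0" using cnt by simp
            then show "v \<in># mset_of n a" using aout in_mset_of by (metis not_gr_zero)
          qed
          then show False using ind e unfolding marked_indep_def by auto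
        next
          case False
          have "c \<in> (\<Inter>v\<in>e. set_mset (\<Gamma>' v))"
          proof
            fix v assume "v \<in> e"
            from c[OF this] have "c \<in># \<Gamma>' v + replicate_mset (a v) (Suc q)" unfolding \<Gamma>_def .
            with False show "c \<in># \<Gamma>' v" unfolding union_iff in_replicate_mset by blast
          qed
          then show False using edge[OF e] by auto
        qed
      qed
    qed
    then show "(\<lambda>v. \<Gamma>' v + replicate_mset (a v) (Suc q)) \<in> piece n E Vsp m q a"
      using cnt unfolding piece_def \<Gamma>_def by auto
  qed
  show "(\<lambda>\<Gamma>. \<lambda>v. \<Gamma> v - replicate_mset (a v) (Suc q)) ` piece n E Vsp m q a
        \<subseteq> marked_colorings n E Vsp (\<lambda>i. m i - a i) q"
  proof safe
    fix \<Gamma> assume P: "\<Gamma> \<in> piece n E Vsp m q a"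
    then have G: "\<Gamma> \<in> marked_colorings n E Vsp m (Suc q)" and cnt: "\<And>v. count (\<Gamma> v) (Suc q) = a v"
      unfolding piece_def by blast+
    have sub: "replicate_mset (a v) (Suc q) \<subseteq># \<Gamma> v" for v
      using cnt[of v] by (simp flip: count_le_replicate_mset_subset_eq)
    have out: "v \<notin> {1..n} \<Longrightarrow> \<Gamma> v = {#}" for v using G unfolding marked_colorings_def by auto
    have inn: "v \<in> {1..n} \<Longrightarrow> set_mset (\<Gamma> v) \<subseteq> {1..Suc q} \<and> size (\<Gamma> v) = m v \<and>
                    (v \<notin> Vsp \<longrightarrow> (\<forall>c. count (\<Gamma> v) c \<le> 1))" for v
      using G unfolding marked_colorings_def by auto
    have edge: "e \<in> E \<Longrightarrow> (\<Inter>v\<in>e. set_mset (\<Gamma> v)) = {}" for e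
      using G unfolding marked_colorings_def by auto
    show "(\<lambda>v. \<Gamma> v - replicate_mset (a v) (Suc q)) \<in> marked_colorings n E Vsp (\<lambda>i. m i - a i) q"
      unfolding marked_colorings_def
    proof (intro CollectI conjI allI ballI impI)
      fix v assume "v \<notin> {1..n}"
      then show "\<Gamma> v - replicate_mset (a v) (Suc q) = {#}" using out by simp
    next
      fix v assume v: "v \<in> {1..n}"
      show "set_mset (\<Gamma> v - replicate_mset (a v) (Suc q)) \<subseteq> {1..q}"
      proof
        fix c assume c: "c \<in># \<Gamma> v - replicate_mset (a v) (Suc q)"
        then have "c \<in># \<Gamma> v" by (rule in_diffD)
        then have "c \<in> {1..Suc q}" using inn[OF v] by auto
        moreover have "Suc q \<notin># \<Gamma> v - replicate_mset (a v) (Suc q)" using cnt[of v] by (simp add: not_in_iff)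
        then have "c \<noteq> Suc q" using c by blast
        ultimately show "c \<in> {1..q}" by auto
      qed
      show "size (\<Gamma> v - replicate_mset (a v) (Suc q)) = m v - a v"
        using inn[OF v] size_Diff_submset[OF sub[of v]] by simp
      fix c assume "v \<notin> Vsp"
      then have "count (\<Gamma> v) c \<le> 1" using inn[OF v] by auto
      then show "count (\<Gamma> v - replicate_mset (a v) (Suc q)) c \<le> 1" by simp
    next
      fix e assume e: "e \<in> E"
      have ss: "set_mset (\<Gamma> v - replicate_mset (a v) (Suc q)) \<subseteq> set_mset (\<Gamma> v)" for v
      proof
        fix c assume "c \<in># \<Gamma> v - replicate_mset (a v) (Suc q)"
        then show "c \<in># \<Gamma> v" by (rule in_diffD)
      qed
      have "(\<Inter>v\<in>e. set_mset (\<Gamma> v - replicate_mset (a v) (Suc q))) \<subseteq> (\<Inter>v\<in>e. set_mset (\<Gamma> v))"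
        by (rule INF_mono') (rule ss)
      then show "(\<Inter>v\<in>e. set_mset (\<Gamma> v - replicate_mset (a v) (Suc q))) = {}" using edge[OF e] by (simp only: subset_empty)
    qed
  qed
qed

lemma col_step:
  assumes hE: "\<forall>e\<in>E. e \<subseteq> {1..n} \<and> e \<noteq> {}" and supp: "mon_supp m \<subseteq> {1..n}"
  shows "(of_nat (card (marked_colorings n E Vsp m (Suc q))) :: rat) =
    (\<Sum>a\<in>Dm m. I_mark n E Vsp a * of_nat (card (marked_colorings n E Vsp (\<lambda>i. m i - a i) q)))"
proof -
  have U: "marked_colorings n E Vsp m (Suc q) = (\<Union>a\<in>Dm m. piece n E Vsp m q a)"
  proof
    show "(\<Union>a\<in>Dm m. piece n E Vsp m q a) \<subseteq> marked_colorings n E Vsp m (Suc q)"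
      unfolding piece_def by blast
  next
    show "marked_colorings n E Vsp m (Suc q) \<subseteq> (\<Union>a\<in>Dm m. piece n E Vsp m q a)"
    proof
      fix \<Gamma> assume G: "\<Gamma> \<in> marked_colorings n E Vsp m (Suc q)"
      have "(\<lambda>v. count (\<Gamma> v) (Suc q)) \<in> Dm m"
        unfolding Dm_def
      proof (intro CollectI allI)
        fix v show "count (\<Gamma> v) (Suc q) \<le> m v"
        proof (cases "v \<in> {1..n}")
          case True
          then have "size (\<Gamma> v) = m v" using G unfolding marked_colorings_def by blast
          then show ?thesis using count_le_size[of "\<Gamma> v" "Suc q"] by simp
        next
          case False
          then have "\<Gamma> v = {#}" using G unfolding marked_colorings_def by blast
          then show ?thesis by simp
        qed
      qed
      moreover have "\<Gamma> \<in> piece n E Vsp m q (\<lambda>v. count (\<Gamma> v) (Suc q))"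
        using G unfolding piece_def by simp
      ultimately show "\<Gamma> \<in> (\<Union>a\<in>Dm m. piece n E Vsp m q a)" by blast
    qed
  qed
  have fin: "finite (Dm m)" by (rule finite_Dm[OF supp])
  have finp: "finite (piece n E Vsp m q a)" for a
    by (rule finite_subset[OF _ col_finite[OF supp, of E Vsp "Suc q"]]) (auto simp: piece_def)
  have card: "card (marked_colorings n E Vsp m (Suc q)) = (\<Sum>a\<in>Dm m. card (piece n E Vsp m q a))"
    unfolding U
    apply (rule card_UN_disjoint[OF fin])
    using finp apply blast
    by (auto simp: piece_def fun_eq_iff)
  have pc: "of_nat (card (piece n E Vsp m q a)) =
     I_mark n E Vsp a * of_nat (card (marked_colorings n E Vsp (\<lambda>i. m i - a i) q))" if a: "a \<in> Dm m" for a
  proof (cases "marked_indep n E Vsp (mset_of n a)")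
    case True
    have "card (marked_colorings n E Vsp (\<lambda>i. m i - a i) q) = card (piece n E Vsp m q a)"
      by (rule bij_betw_same_card[OF piece_bij[OF supp a True]])
    then show ?thesis using I_val[OF supp_le[OF supp a], of E Vsp] True by simp
  next
    case False
    then show ?thesis using I_val[OF supp_le[OF supp a], of E Vsp] piece_empty[OF False] by simp
  qed
  show ?thesis unfolding card of_nat_sum by (rule sum.cong[OF refl]) (rule pc)
qed

lemma pow_col:
  assumes hE: "\<forall>e\<in>E. e \<subseteq> {1..n} \<and> e \<noteq> {}" and supp: "mon_supp m \<subseteq> {1..n}"
  shows "mfps_pow (I_mark n E Vsp) q m = of_nat (card (marked_colorings n E Vsp m q))"
  using supp
proof (induction q arbitrary: m)
  case 0
  then show ?case using col0[OF hE 0] by simp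
next
  case (Suc q)
  have "mfps_pow (I_mark n E Vsp) (Suc q) m =
     (\<Sum>a\<in>Dm m. I_mark n E Vsp a * of_nat (card (marked_colorings n E Vsp (\<lambda>i. m i - a i) q)))"
    unfolding mfps_pow.simps mult_Dm using Suc.IH[OF supp_diff[OF Suc.prems]] by simp
  also have "\<dots> = of_nat (card (marked_colorings n E Vsp m (Suc q)))"
    by (rule col_step[OF hE Suc.prems, symmetric])
  finally show ?case .
qed

theorem theorem4p3:
  fixes n :: nat and E :: "nat set set" and Vsp :: "nat set"
  assumes "\<forall>e\<in>E. e \<subseteq> {1..n} \<and> e \<noteq> {}"
    and "Vsp \<subseteq> {1..n}"
  shows "\<forall>m. mon_supp m \<subseteq> {1..n} \<longrightarrow>
           (\<exists>P :: rat poly.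
              (\<forall>q::nat. q > 0 \<longrightarrow> poly P (of_nat q) = of_nat (card (marked_colorings n E Vsp m q))) \<and>
              (\<forall>q::int. mfps_ipow n (I_mark n E Vsp) q m = poly P (of_int q)))"
proof (intro allI impI)
  fix m :: "nat \<Rightarrow> nat" assume supp: "mon_supp m \<subseteq> {1..n}"
  have f0: "I_mark n E Vsp (\<lambda>_. 0) = 1" by (rule I0[OF assms(1)])
  show "\<exists>P :: rat poly.
              (\<forall>q::nat. q > 0 \<longrightarrow> poly P (of_nat q) = of_nat (card (marked_colorings n E Vsp m q))) \<and>
              (\<forall>q::int. mfps_ipow n (I_mark n E Vsp) q m = poly P (of_int q))"
  proof (intro exI conjI allI impI)
    fix q :: nat
    show "poly (Pm (I_mark n E Vsp) n m) (of_nat q) = of_nat (card (marked_colorings n E Vsp m q))"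
      using Pm_nat[of "I_mark n E Vsp", OF f0 supp, of q] pow_col[OF assms(1) supp, of Vsp q] by simp
  next
    fix q :: int
    show "mfps_ipow n (I_mark n E Vsp) q m = poly (Pm (I_mark n E Vsp) n m) (of_int q)"
      by (rule ipow_poly[of "I_mark n E Vsp", OF f0 supp])
  qed
qed

end
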